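(* Let $p$ be a prime, let $r,s$ be positive integers with $r\le s$, and let $m\ge 0$ be the smallest integer with $r\leq p^m$. Then $\lambda(r,s,p)$ is the uniform partition $(s,s,\dots,s)$ (equivalently the deviation vector $\varepsilon(r,s,p)$ equals $(0,\dots,0)$) if and only if $s\equiv 0\pmod{p^m}$.
   Context: For a positive integer $n$, let $J_n$ denote the $n\times n$ matrix with $1$s in positions $(i,i)$ for $1\le i\le n$ and $(i,i+1)$ for $1\le i<n$, and $0$s elsewhere. For $1\le r\le s$ and a field $F$ of characteristic $p$, the Jordan canonical form of $J_r\otimes J_s$ over $F$ is $J_{\lambda_1}\oplus\cdots\oplus J_{\lambda_r}$ with $\lambda_1\ge\cdots\ge\lambda_r>0$; write $\lambda(r,s,p)=(\lambda_1,\dots,\lambda_r)$ (a partition of $rs$ depending only on $r,s,p$). The deviation vector is $\varepsilon(r,s,p)=(\lambda_1-s,\dots,\lambda_r-s)$. *)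

theory Defs
  imports "Jordan_Normal_Form.Jordan_Normal_Form"
begin

definition kron_mat :: "'a :: times mat \<Rightarrow> 'a mat \<Rightarrow> 'a mat" where
  "kron_mat A B = mat (dim_row A * dim_row B) (dim_col A * dim_col B)
     (\<lambda>(i,j). A $$ (i div dim_row B, j div dim_col B) * B $$ (i mod dim_row B, j mod dim_col B))"

end

theory Submission
  imports Defs "Jordan_Normal_Form.Jordan_Normal_Form_Uniqueness"
begin


lemma N1:
  fixes p m s t :: nat
  assumes "prime p" "p ^ m dvd s" "0 < t" "t < p ^ m"
  shows "p dvd (s choose t)"
proof (rule ccontr)
  assume nd: "\<not> p dvd (s choose t)"
  show False
  proof (cases s)
    case 0 thus ?thesis using nd assms by (cases t) auto
  next
    case (Suc n)
    obtain k where t: "t = Suc k" using assms(3) by (cases t) auto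
    have "Suc n * (n choose k) = Suc k * (Suc n choose Suc k)" by (rule Suc_times_binomial[symmetric])
    hence "p ^ m dvd t * (s choose t)" using assms(2) Suc t
      by (metis dvd_mult2)
    moreover have "coprime (p ^ m) (s choose t)"
      using nd assms(1) by (simp add: prime_imp_coprime coprime_power_left_iff)
    ultimately have "p ^ m dvd t" using coprime_dvd_mult_left_iff by blast
    thus False using assms(3,4) by (simp add: nat_dvd_not_less)
  qed
qed

lemma N2:
  fixes p j u :: nat
  assumes p: "prime p" and ch: "CHAR('a::field) = p" and u: "\<not> p dvd u"
  shows "of_nat ((p^j * u) choose (p^j)) \<noteq> (0::'a)"
proof -
  define q where "q = p ^ j"
  have q0: "q > 0" using p q_def by (simp add: prime_gt_0_nat)
  have u0: "u > 0" using u by (cases u) auto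
  have X: "[:1,1:] ^ q = (1 + monom 1 q :: 'a poly)"
  proof (rule poly_eqI)
    fix i
    show "coeff ([:1,1:] ^ q) i = coeff (1 + monom 1 q :: 'a poly) i"
    proof (cases "i \<le> q")
      case True
      have c: "coeff ([:1,1:] ^ q) i = (of_nat (q choose i) :: 'a)"
        using coeff_linear_poly_power[OF True, of "1::'a" 1] by simp
      show ?thesis
      proof (cases "i = 0 \<or> i = q")
        case True thus ?thesis using c q0 by (auto simp: coeff_monom)
      next
        case False
        hence "p dvd (q choose i)" using N1[OF p, of j q i] q_def True by auto
        hence "(of_nat (q choose i) :: 'a) = 0" using ch by (simp add: of_nat_eq_0_iff_char_dvd)
        thus ?thesis using c False by (auto simp: coeff_monom)
      qed
    next
      case False
      hence "coeff ([:1,1:] ^ q :: 'a poly) i = 0"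
        by (intro coeff_eq_0) (simp add: degree_linear_power)
      thus ?thesis using False by (simp add: coeff_monom)
    qed
  qed
  have "([:1,1:] :: 'a poly) ^ (q * u) = (monom 1 q + 1) ^ u"
    by (simp add: power_mult X add.commute)
  also have "\<dots> = (\<Sum>k\<le>u. monom (of_nat (u choose k)) (q * k))"
    apply (simp add: binomial_ring monom_power mult.commute smult_monom flip: monom_altdef of_nat_poly)
    apply (intro sum.cong refl)
    apply (simp add: of_nat_poly smult_monom flip: smult_one)
    done
  finally have E: "([:1,1:] :: 'a poly) ^ (q * u) = (\<Sum>k\<le>u. monom (of_nat (u choose k)) (q * k))" .
  have "coeff (\<Sum>k\<le>u. monom (of_nat (u choose k) :: 'a) (q * k)) q
      = (\<Sum>k\<le>u. if k = 1 then of_nat (u choose k) else 0)"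
    unfolding coeff_sum coeff_monom using q0 by (intro sum.cong) auto
  also have "\<dots> = of_nat u" using u0 by simp
  finally have "coeff (([:1,1:] :: 'a poly) ^ (q * u)) q = of_nat u" using E by simp
  moreover have "coeff (([:1,1:] :: 'a poly) ^ (q * u)) q = of_nat ((q*u) choose q)"
    using coeff_linear_poly_power[of q "q*u" "1::'a" 1] u0 by simp
  ultimately have "(of_nat ((q*u) choose q) :: 'a) = of_nat u" by simp
  moreover have "(of_nat u :: 'a) \<noteq> 0" using u ch by (simp add: of_nat_eq_0_iff_char_dvd)
  ultimately show ?thesis unfolding q_def by simp
qed


definition Zp :: "'a::comm_ring_1 poly poly" where "Zp = [:[:0,1:], [:1,1:]:]"

lemma coeff_lin_pow: "coeff (([:1,1:] :: 'a::comm_ring_1 poly) ^ g) t = of_nat (g choose t)"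
proof (cases "t \<le> g")
  case True thus ?thesis using coeff_linear_poly_power[OF True, of "1::'a" 1] by simp
next
  case False
  hence "coeff (([:1,1:] :: 'a poly) ^ g) t = 0" by (intro coeff_eq_0) (simp add: degree_linear_power)
  thus ?thesis using False by (simp add: binomial_eq_0)
qed

lemma Zp_pow: "(Zp :: 'a::comm_ring_1 poly poly) ^ j =
  (\<Sum>k\<le>j. monom (of_nat (j choose k) * monom 1 (j-k) * [:1,1:]^k) k)"
proof -
  have "(Zp :: 'a poly poly) = monom [:1,1:] 1 + [:monom 1 1:]"
    unfolding Zp_def by (simp add: monom_Suc monom_0 flip: pCons_one)
  hence "(Zp :: 'a poly poly) ^ j = (monom [:1,1:] 1 + [:monom 1 1:]) ^ j" by simp
  also have "\<dots> = (\<Sum>k\<le>j. of_nat (j choose k) * monom [:1,1:] 1 ^ k * [:monom 1 1:] ^ (j-k))"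
    by (rule binomial_ring)
  also have "\<dots> = (\<Sum>k\<le>j. monom (of_nat (j choose k) * monom 1 (j-k) * [:1,1:]^k) k)"
  proof (intro sum.cong refl)
    fix k
    show "of_nat (j choose k) * monom [:1,1:] 1 ^ k * [:monom 1 1:] ^ (j-k) =
      (monom (of_nat (j choose k) * monom 1 (j-k) * [:1,1:]^k) k :: 'a poly poly)"
    proof -
      have a: "[:monom (1::'a) 1:] ^ (j-k) = [:monom 1 (j-k):]"
        by (simp add: poly_const_pow monom_power)
      have b: "monom [:1,1:] 1 ^ k = monom ([:1,1:]^k :: 'a poly) k"
        by (simp add: monom_power)
      have c: "\<And>c a d k. (of_nat c :: 'a poly poly) * monom a k * [:d:] = monom (of_nat c * d * a) k"
        by (simp add: of_nat_poly[where 'a="'a poly"] smult_monom mult.commute[of _ "[:_:]"] mult.commute)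
      show ?thesis unfolding a b c by (simp add: mult.commute mult.left_commute)
    qed
  qed
  finally show ?thesis .
qed

lemma Zp_coeff:
  "coeff (coeff ((Zp :: 'a::comm_ring_1 poly poly) ^ j * [:monom 1 e:]) g) f =
   (if g \<le> j \<and> j - g + e \<le> f then of_nat ((j choose g) * (g choose (f - (j - g + e)))) else 0)"
proof -
  have "coeff ((Zp :: 'a poly poly) ^ j) g =
    (if g \<le> j then of_nat (j choose g) * monom 1 (j-g) * [:1,1:]^g else 0)"
    unfolding Zp_pow coeff_sum coeff_monom by (simp add: sum.delta)
  moreover have "coeff ((Zp :: 'a poly poly) ^ j * [:monom 1 e:]) g = monom 1 e * coeff (Zp ^ j) g"
    by (simp add: mult_pCons_right)
  ultimately have "coeff (coeff ((Zp :: 'a poly poly) ^ j * [:monom 1 e:]) g) f =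
     (if g \<le> j then coeff (monom 1 e * ([:1,1:] ^ g * monom (of_nat (j choose g)) (j - g))) f else 0)"
    by (simp add: of_nat_poly[where 'a="'a"] mult_monom smult_monom mult.commute mult.left_commute flip: smult_one)
  moreover have "g \<le> j \<Longrightarrow> monom 1 e * ([:1,1:] ^ g * monom (of_nat (j choose g)) (j - g)) =
     ([:1,1:] ^ g * monom (of_nat (j choose g)) (j + e - g) :: 'a poly)"
  proof -
    assume g: "g \<le> j"
    have "monom 1 e * ([:1,1:] ^ g * monom (of_nat (j choose g)) (j - g)) =
       ([:1,1:] ^ g * (monom 1 e * monom (of_nat (j choose g)) (j - g)) :: 'a poly)"
      by (simp add: mult.left_commute)
    also have "\<dots> = [:1,1:] ^ g * monom (of_nat (j choose g)) (j + e - g)"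
      using g by (simp add: mult_monom add.commute)
    finally show ?thesis .
  qed
  ultimately show ?thesis by (simp add: coeff_monom_mult coeff_lin_pow mult.commute[of "[:1,1:]^_"])
qed


definition vecP :: "nat \<Rightarrow> nat \<Rightarrow> 'a::comm_ring_1 poly poly \<Rightarrow> 'a vec" where
  "vecP r s P = vec (r*s) (\<lambda>i. coeff (coeff P (s - 1 - i mod s)) (r - 1 - i div s))"

lemma sum_split_rs: fixes r s :: nat shows "(\<Sum>j<r*s. f j) = (\<Sum>a<r. \<Sum>b<s. f (a*s+b))"
proof (induct r)
  case (Suc r)
  have e: "{..<Suc r * s} = {..<r*s} \<union> {r*s..<r*s+s}" by auto
  have "(\<Sum>j<Suc r*s. f j) = (\<Sum>j<r*s. f j) + (\<Sum>j\<in>{r*s..<r*s+s}. f j)"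
    unfolding e by (rule sum.union_disjoint) auto
  also have "(\<Sum>j\<in>{r*s..<r*s+s}. f j) = (\<Sum>b<s. f (r*s+b))"
    by (simp add: sum.shift_bounds_nat_ivl[where k="r*s" and m=0, simplified] lessThan_atLeast0 add.commute)
  finally show ?case using Suc by simp
qed simp

lemma jb_sum: assumes "a < n"
  shows "(\<Sum>a'<n. jordan_block n (1::'a::comm_ring_1) $$ (a,a') * h a') = h a + (if Suc a < n then h (Suc a) else 0)"
proof -
  have "(\<Sum>a'<n. jordan_block n (1::'a) $$ (a,a') * h a') =
     (\<Sum>a'<n. (if a' = a then h a' else 0) + (if a' = Suc a then h a' else 0))"
    using assms by (intro sum.cong) auto
  also have "\<dots> = h a + (if Suc a < n then h (Suc a) else 0)"
    using assms by (simp add: sum.distrib)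
  finally show ?thesis .
qed

lemma coeff_lin_mult: "coeff ([:1,1:] * (q::'a::comm_semiring_1 poly)) n = coeff q n + (if n = 0 then 0 else coeff q (n - 1))"
  by (cases n) (simp_all add: mult_pCons_left coeff_pCons)

abbreviation Amat :: "nat \<Rightarrow> nat \<Rightarrow> 'a::comm_ring_1 mat" where
  "Amat r s \<equiv> kron_mat (jordan_block r 1) (jordan_block s 1)"

lemma Amat_dims[simp]: "dim_row (Amat r s) = r * s" "dim_col (Amat r s) = r * s"
  by (simp_all add: kron_mat_def)

lemma Amat_carrier[simp]: "Amat r s \<in> carrier_mat (r*s) (r*s)"
  by (rule carrier_matI) simp_all

lemma Amat_index: "i < r*s \<Longrightarrow> j < r*s \<Longrightarrow> (Amat r s :: 'a::comm_ring_1 mat) $$ (i,j) =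
   jordan_block r 1 $$ (i div s, j div s) * jordan_block s 1 $$ (i mod s, j mod s)"
  by (simp add: kron_mat_def)

lemma vecP_dim[simp]: "dim_vec (vecP r s P) = r*s"
  unfolding vecP_def by (rule dim_vec)
lemma vecP_carrier[simp]: "vecP r s P \<in> carrier_vec (r*s)"
  unfolding carrier_vec_def by simp

lemma Amat_vecP:
  fixes P :: "'a::comm_ring_1 poly poly"
  shows "Amat r s *\<^sub>v vecP r s P = vecP r s ([:[:1,1:],[:1,1:]:] * P)"
proof (rule eq_vecI)
  show "dim_vec (Amat r s *\<^sub>v vecP r s P) = dim_vec (vecP r s ([:[:1,1:],[:1,1:]:] * P))" by simp
  fix i assume "i < dim_vec (vecP r s ([:[:1,1:],[:1,1:]:] * P))"
  hence i: "i < r * s" by simp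
  define a b where "a = i div s" and "b = i mod s"
  have s0: "s > 0" using i by (cases s) auto
  have ab: "a < r" "b < s" "i = a * s + b"
    unfolding a_def b_def using less_mult_imp_div_less[OF i] s0 by simp_all
  define F where "F a' b' = coeff (coeff P (s - 1 - b')) (r - 1 - a')" for a' b'
  have "(Amat r s *\<^sub>v vecP r s P) $ i = (\<Sum>j<r*s. Amat r s $$ (i,j) * vecP r s P $ j)"
    using i by (simp add: scalar_prod_def row_def lessThan_atLeast0)
  also have "\<dots> = (\<Sum>a'<r. \<Sum>b'<s. Amat r s $$ (i,a'*s+b') * vecP r s P $ (a'*s+b'))"
    by (rule sum_split_rs)
  also have "\<dots> = (\<Sum>a'<r. jordan_block r 1 $$ (a,a') *
       (\<Sum>b'<s. jordan_block s 1 $$ (b,b') * F a' b'))"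
  proof (intro sum.cong refl, unfold sum_distrib_left, intro sum.cong refl)
    fix a' b' assume "a' \<in> {..<r}" "b' \<in> {..<s}"
    hence x: "a'*s+b' < r*s" "(a'*s+b') div s = a'" "(a'*s+b') mod s = b'"
    proof -
      have "a'*s+b' < (Suc a')*s" using \<open>b' \<in> {..<s}\<close> by simp
      also have "\<dots> \<le> r*s" using \<open>a' \<in> {..<r}\<close> by (intro mult_le_mono1) simp
      finally show "a'*s+b' < r*s" .
      show "(a'*s+b') div s = a'" "(a'*s+b') mod s = b'" using \<open>b' \<in> {..<s}\<close> by auto
    qed
    show "Amat r s $$ (i,a'*s+b') * vecP r s P $ (a'*s+b') =
      jordan_block r 1 $$ (a,a') * (jordan_block s 1 $$ (b,b') * F a' b')"
      using x i by (simp add: Amat_index vecP_def F_def a_def b_def)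
  qed
  also have "\<dots> = (\<Sum>a'<r. jordan_block r 1 $$ (a,a') *
       (F a' b + (if Suc b < s then F a' (Suc b) else 0)))"
    by (intro sum.cong refl, subst jb_sum[OF ab(2)], rule refl)
  also have "\<dots> = (F a b + (if Suc b < s then F a (Suc b) else 0)) +
     (if Suc a < r then (F (Suc a) b + (if Suc b < s then F (Suc a) (Suc b) else 0)) else 0)"
    by (rule jb_sum[OF ab(1), where h="\<lambda>a'. F a' b + (if Suc b < s then F a' (Suc b) else 0)"])
  also have "\<dots> = vecP r s ([:[:1,1:],[:1,1:]:] * P) $ i"
  proof -
    have U: "([:[:1,1:],[:1,1:]:] :: 'a poly poly) * P = Polynomial.smult [:1,1:] ([:1,1:] * P)"
      by (simp add: mult_pCons_left smult_add_right smult_pCons)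
    define g f where "g = s - 1 - b" and "f = r - 1 - a"
    have v: "vecP r s ([:[:1,1:],[:1,1:]:] * P) $ i = coeff (coeff ([:[:1,1:],[:1,1:]:] * P) g) f"
      using i by (simp add: vecP_def a_def b_def g_def f_def)
    have cg: "coeff ([:[:1,1:],[:1,1:]:] * P) g = [:1,1:] * (coeff P g + (if g = 0 then 0 else coeff P (g - 1)))"
      by (simp only: U coeff_smult coeff_lin_mult)
    have e1: "Suc b < s \<longleftrightarrow> g \<noteq> 0" "Suc a < r \<longleftrightarrow> f \<noteq> 0" using ab by (auto simp: g_def f_def)
    have e2: "s - 1 - Suc b = g - 1" "r - 1 - Suc a = f - 1" by (auto simp: g_def f_def)
    show ?thesis unfolding v cg coeff_lin_mult F_def e1 e2 g_def[symmetric] f_def[symmetric]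
      by (simp add: algebra_simps)
  qed
  finally show "(Amat r s *\<^sub>v vecP r s P) $ i = vecP r s ([:[:1,1:],[:1,1:]:] * P) $ i" .
qed


lemma vecP_diff: "vecP r s (P - Q) = vecP r s P - vecP r s Q"
  by (rule eq_vecI) (simp_all add: vecP_def)

lemma charA: "char_matrix (Amat r s) (1::'a::field) = Amat r s - 1\<^sub>m (r*s)"
  by (rule eq_matI) (simp_all add: char_matrix_def)

lemma charA_vecP: "char_matrix (Amat r s) (1::'a::field) *\<^sub>v vecP r s P = vecP r s (Zp * P)"
proof -
  have U: "([:[:1,1:],[:1,1:]:] :: 'a poly poly) = Zp + 1" by (simp add: Zp_def one_pCons)
  have "char_matrix (Amat r s) (1::'a) *\<^sub>v vecP r s P = Amat r s *\<^sub>v vecP r s P - 1\<^sub>m (r*s) *\<^sub>v vecP r s P"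
    unfolding charA by (rule minus_mult_distrib_mat_vec) auto
  also have "\<dots> = vecP r s ([:[:1,1:],[:1,1:]:] * P) - vecP r s P"
    by (simp add: Amat_vecP)
  also have "\<dots> = vecP r s (Zp * P)"
    by (simp add: U distrib_right flip: vecP_diff)
  finally show ?thesis .
qed

lemma charA_pow: "(char_matrix (Amat r s) (1::'a::field) ^\<^sub>m k) *\<^sub>v vecP r s P = vecP r s (Zp ^ k * P)"
proof (induct k arbitrary: P)
  case 0
  show ?case by (simp add: char_matrix_def)
next
  case (Suc k)
  have C: "char_matrix (Amat r s) (1::'a) \<in> carrier_mat (r*s) (r*s)" by simp
  have "(char_matrix (Amat r s) (1::'a) ^\<^sub>m Suc k) *\<^sub>v vecP r s P =
    (char_matrix (Amat r s) 1 ^\<^sub>m k) *\<^sub>v (char_matrix (Amat r s) 1 *\<^sub>v vecP r s P)"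
    using C by (simp add: assoc_mult_mat_vec[of _ "r*s" "r*s" _ "r*s"])
  also have "\<dots> = vecP r s (Zp ^ Suc k * P)" by (simp add: charA_vecP Suc, simp add: ac_simps)
  finally show ?case .
qed

lemma diag_rep:
  assumes B: "B \<in> carrier_mat s s" and s: "s > 0"
  shows "diag_block_mat (replicate r B) \<in> carrier_mat (r*s) (r*s) \<and>
    (\<forall>i j. i < r*s \<longrightarrow> j < r*s \<longrightarrow> diag_block_mat (replicate r B) $$ (i,j) =
      (if i div s = j div s then B $$ (i mod s, j mod s) else 0))"
proof (induct r)
  case 0 thus ?case by simp
next
  case (Suc r)
  let ?D = "diag_block_mat (replicate r B)"
  from Suc have D: "?D \<in> carrier_mat (r*s) (r*s)" by blast
  from Suc have De: "\<And>i j. i < r*s \<Longrightarrow> j < r*s \<Longrightarrow> ?D $$ (i,j) =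
      (if i div s = j div s then B $$ (i mod s, j mod s) else 0)" by blast
  have eq: "diag_block_mat (replicate (Suc r) B) = four_block_mat B (0\<^sub>m s (r*s)) (0\<^sub>m (r*s) s) ?D"
    using B D by (simp add: Let_def)
  show ?case
  proof
    show "diag_block_mat (replicate (Suc r) B) \<in> carrier_mat (Suc r * s) (Suc r * s)"
      unfolding eq using B D by (intro carrier_matI) auto
    show "\<forall>i j. i < Suc r * s \<longrightarrow> j < Suc r * s \<longrightarrow> diag_block_mat (replicate (Suc r) B) $$ (i, j) =
      (if i div s = j div s then B $$ (i mod s, j mod s) else 0)"
    proof (intro allI impI)
      fix i j assume i: "i < Suc r * s" and j: "j < Suc r * s"
      have dims: "dim_row B = s" "dim_col B = s" "dim_row ?D = r*s" "dim_col ?D = r*s" using B D by auto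
      show "diag_block_mat (replicate (Suc r) B) $$ (i, j) =
        (if i div s = j div s then B $$ (i mod s, j mod s) else 0)"
      proof (cases "i < s")
        case True
        show ?thesis
        proof (cases "j < s")
          case True thus ?thesis using \<open>i < s\<close> i j unfolding eq by (simp add: dims)
        next
          case False
          have "j div s \<noteq> 0" using False s by (simp add: div_eq_0_iff)
          thus ?thesis using \<open>i < s\<close> False i j unfolding eq by (simp add: dims)
        qed
      next
        case False
        have i': "i - s < r * s" using i False by simp
        have idiv: "i div s = Suc ((i - s) div s)" "i mod s = (i - s) mod s"
          using False s by (simp_all add: le_div_geq le_mod_geq)
        show ?thesis
        proof (cases "j < s")
          case True
          have "i div s \<noteq> 0" using False s by (simp add: div_eq_0_iff)
          thus ?thesis using True False i j unfolding eq by (simp add: dims)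
        next
          case F2: False
          have j': "j - s < r * s" using j F2 by simp
          have jdiv: "j div s = Suc ((j - s) div s)" "j mod s = (j - s) mod s"
            using F2 s by (simp_all add: le_div_geq le_mod_geq)
          show ?thesis using False F2 i j unfolding eq by (simp add: dims De[OF i' j'] idiv jdiv)
        qed
      qed
    qed
  qed
qed

lemma jm_diag: "jordan_matrix (replicate r (s,a)) = diag_block_mat (replicate r (jordan_block s a))"
  unfolding jordan_matrix_def by (simp add: map_replicate)

lemma jm_index: assumes "s > 0" "i < r*s" "j < r*s"
  shows "jordan_matrix (replicate r (s,a)) $$ (i,j) =
    (if i div s = j div s then jordan_block s a $$ (i mod s, j mod s) else 0)"
  unfolding jm_diag using diag_rep[OF jordan_block_carrier assms(1), of r a] assms by blast

lemma jm_carrier: "jordan_matrix (replicate r (s,a)) \<in> carrier_mat (r*s) (r*s)"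
  using jordan_matrix_carrier[of "replicate r (s,a)"] by (simp add: sum_list_replicate)


lemma NT2:
  fixes p r s :: nat
  assumes p: "prime p" and r: "0 < r" "r \<le> s" and nd: "\<not> p ^ (LEAST m. r \<le> p ^ m) dvd s"
  shows "\<exists>j u. s = p^j * u \<and> \<not> p dvd u \<and> p^j < r"
proof -
  let ?m = "LEAST m. r \<le> p ^ m"
  have s0: "s \<noteq> 0" using r by simp
  have nu: "\<not> is_unit p" using p by (simp add: prime_nat_iff)
  obtain u where su: "s = p ^ multiplicity p s * u" "\<not> p dvd u"
    using multiplicity_decompose'[OF s0 nu] by blast
  have "multiplicity p s < ?m"
  proof (rule ccontr)
    assume "\<not> multiplicity p s < ?m"
    hence "p ^ ?m dvd s" using power_dvd_iff_le_multiplicity[OF s0 nu] by simp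
    thus False using nd by simp
  qed
  hence "\<not> r \<le> p ^ multiplicity p s" by (rule not_less_Least)
  thus ?thesis using su by (intro exI[of _ "multiplicity p s"] exI[of _ u]) auto
qed

lemma divmod_eq_iff: "(i div s = j div s \<and> i mod s = j mod s) \<longleftrightarrow> (i::nat) = j"
  by (metis div_mult_mod_eq)

lemma charJm: assumes s: "s > 0"
  shows "char_matrix (jordan_matrix (replicate r (s,1::'a::field))) 1 = jordan_matrix (replicate r (s,0))"
proof (rule eq_matI)
  have d: "dim_row (jordan_matrix (replicate r (s,c::'a))) = r*s"
          "dim_col (jordan_matrix (replicate r (s,c::'a))) = r*s" for c
    using jm_carrier[of r s c] by auto
  show "dim_row (char_matrix (jordan_matrix (replicate r (s, 1::'a))) 1) = dim_row (jordan_matrix (replicate r (s, 0::'a)))"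
    "dim_col (char_matrix (jordan_matrix (replicate r (s, 1::'a))) 1) = dim_col (jordan_matrix (replicate r (s, 0::'a)))"
    by (simp_all add: char_matrix_def d)
  fix i j assume i: "i < dim_row (jordan_matrix (replicate r (s, 0::'a)))" and j: "j < dim_col (jordan_matrix (replicate r (s, 0::'a)))"
  hence ij: "i < r*s" "j < r*s" by (simp_all add: d sum_list_replicate)
  have ms: "i mod s < s" "j mod s < s" using s by simp_all
  show "char_matrix (jordan_matrix (replicate r (s, 1::'a))) 1 $$ (i, j) = jordan_matrix (replicate r (s, 0)) $$ (i, j)"
  proof -
    have e1: "char_matrix (jordan_matrix (replicate r (s, 1::'a))) 1 $$ (i, j) =
       jordan_matrix (replicate r (s, 1)) $$ (i,j) - (if i = j then 1 else 0)"
      using ij by (simp add: char_matrix_def sum_list_replicate d)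
    show ?thesis unfolding e1 jm_index[OF s ij] using ms divmod_eq_iff[of i s j] by auto
  qed
qed

lemma Jm0_pow: assumes s: "s > 0"
  shows "jordan_matrix (replicate r (s,0::'a::field)) ^\<^sub>m s = 0\<^sub>m (r*s) (r*s)"
proof -
  have z: "jordan_block s (0::'a) ^\<^sub>m s = 0\<^sub>m s s"
    unfolding jordan_block_pow by (rule eq_matI) auto
  have e: "jordan_matrix (replicate r (s,0::'a)) ^\<^sub>m s = diag_block_mat (replicate r (0\<^sub>m s s))"
    unfolding jordan_matrix_pow by (simp add: map_replicate z)
  from diag_rep[OF zero_carrier_mat s, of r, where 'a='a] 
  show ?thesis unfolding e using s by (intro eq_matI) auto
qed

lemma dir1:
  fixes p r s :: nat
  assumes p: "prime p" and ch: "CHAR('a::field) = p" and r: "0 < r" "r \<le> s"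
    and jnf: "jordan_nf (Amat r s :: 'a mat) (replicate r (s, 1))"
  shows "p ^ (LEAST m. r \<le> p ^ m) dvd s"
proof (rule ccontr)
  assume nd: "\<not> ?thesis"
  obtain j u where ju: "s = p^j * u" "\<not> p dvd u" "p^j < r" using NT2[OF p r nd] by blast
  define q where "q = p ^ j"
  have q0: "q > 0" using p q_def by (simp add: prime_gt_0_nat)
  have s: "s > 0" using r by simp
  from jnf obtain P Q where wit: "similar_mat_wit (Amat r s) (jordan_matrix (replicate r (s, 1::'a))) P Q"
    unfolding jordan_nf_def similar_mat_def by blast
  have PQ: "P \<in> carrier_mat (r*s) (r*s)" "Q \<in> carrier_mat (r*s) (r*s)"
    using wit unfolding similar_mat_wit_def Let_def by auto
  have "char_matrix (Amat r s) (1::'a) ^\<^sub>m s = P * char_matrix (jordan_matrix (replicate r (s, 1::'a))) 1 ^\<^sub>m s * Q"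
    by (rule similar_mat_wit_pow_id[OF similar_mat_wit_char_matrix[OF wit]])
  also have "\<dots> = 0\<^sub>m (r*s) (r*s)"
    using PQ by (simp add: charJm[OF s] Jm0_pow[OF s])
  finally have Z: "char_matrix (Amat r s) (1::'a) ^\<^sub>m s = 0\<^sub>m (r*s) (r*s)" .
  have "vecP r s (Zp ^ s * [:monom 1 0:]) = (0\<^sub>v (r*s) :: 'a vec)"
  proof -
    have "0\<^sub>m (r * s) (r * s) *\<^sub>v vecP r s [:monom (1::'a) 0:] = 0\<^sub>v (r*s)"
      by (rule eq_vecI) (auto simp: scalar_prod_def)
    thus ?thesis using charA_pow[of r s s "[:monom (1::'a) 0:]"] by (simp add: Z)
  qed
  moreover define i0 where "i0 = (r - 1 - q) * s + (q - 1)"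
  have u0: "u > 0" using ju(2) by (cases u) auto
  have qr: "q < r" "q \<le> s" using ju r q_def u0 by auto
  have i0: "i0 < r * s" "i0 div s = r - 1 - q" "i0 mod s = q - 1"
  proof -
    have "i0 < (r - 1 - q) * s + s" unfolding i0_def using qr q0 by simp
    also have "\<dots> = Suc (r - 1 - q) * s" by simp
    also have "\<dots> \<le> r * s" using qr by (intro mult_le_mono1) simp
    finally show "i0 < r * s" .
    have g: "\<And>a b. b < s \<Longrightarrow> (a*s+b) div s = a \<and> (a*s+b) mod s = b" by auto
    have "q - 1 < s" using qr q0 by simp
    from g[OF this, of "r - 1 - q"]
    show "i0 div s = r - 1 - q" "i0 mod s = q - 1" unfolding i0_def by auto
  qed
  ultimately have "vecP r s (Zp ^ s * [:monom 1 0:]) $ i0 = (0::'a)" by simp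
  hence "coeff (coeff ((Zp::'a poly poly) ^ s * [:monom 1 0:]) (s - q)) q = 0"
    using i0 qr q0 by (simp add: vecP_def)
  hence "(of_nat (s choose (s - q)) :: 'a) = 0"
    using qr Zp_coeff[of s 0 "s - q" q, where 'a='a] by simp
  hence "(of_nat (s choose q) :: 'a) = 0" using qr by (simp add: binomial_symmetric[symmetric])
  thus False using N2[OF p ch ju(2), of j] ju(1) q_def by simp
qed


lemma vecP_add: "vecP r s (P + Q) = vecP r s P + vecP r s Q"
  by (rule eq_vecI) (simp_all add: vecP_def)

lemma least_pow:
  fixes p r :: nat assumes "prime p"
  shows "r \<le> p ^ (LEAST m. r \<le> p ^ m)"
proof (rule LeastI_ex)
  have "r < 2 ^ r" by (rule less_exp)
  also have "(2::nat) ^ r \<le> p ^ r" using prime_ge_2_nat[OF assms] by (rule power_mono) simp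
  finally have "r < p ^ r" .
  thus "\<exists>m. r \<le> p ^ m" by (intro exI[of _ r]) simp
qed

lemma vanish:
  fixes p r s :: nat
  assumes p: "prime p" and ch: "CHAR('a::field) = p" and dv: "p ^ (LEAST m. r \<le> p ^ m) dvd s"
    and g: "g < s" and f: "f < r"
  shows "coeff (coeff ((Zp :: 'a poly poly) ^ s * [:monom 1 e:]) g) f = 0"
proof -
  let ?m = "LEAST m. r \<le> p ^ m"
  have rm: "r \<le> p ^ ?m" by (rule least_pow[OF p])
  show ?thesis
  proof (cases "s - g + e \<le> f")
    case True
    have "p dvd (s choose (s - g))"
      by (rule N1[OF p dv]) (use g f True rm in auto)
    hence "p dvd (s choose g)" using g by (simp add: binomial_symmetric[symmetric])
    hence "(of_nat (s choose g) :: 'a) = 0" using ch by (simp add: of_nat_eq_0_iff_char_dvd)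
    thus ?thesis unfolding Zp_coeff by simp
  next
    case False thus ?thesis unfolding Zp_coeff by simp
  qed
qed

definition Wp :: "nat \<Rightarrow> nat \<Rightarrow> nat \<Rightarrow> 'a::comm_ring_1 poly poly" where
  "Wp r s c = Zp ^ (s - 1 - c mod s) * [:monom 1 (r - 1 - c div s):]"

definition Pm :: "nat \<Rightarrow> nat \<Rightarrow> 'a::comm_ring_1 mat" where
  "Pm r s = mat (r*s) (r*s) (\<lambda>(i,c). vecP r s (Wp r s c) $ i)"

lemma Pm_carrier: "Pm r s \<in> carrier_mat (r*s) (r*s)"
  unfolding Pm_def by (rule carrier_matI) simp_all

lemma Pm_dims[simp]: "dim_row (Pm r s) = r*s" "dim_col (Pm r s) = r*s"
  unfolding Pm_def by simp_all

lemma Pm_index: "i < r*s \<Longrightarrow> c < r*s \<Longrightarrow> (Pm r s :: 'a::comm_ring_1 mat) $$ (i,c) =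
  coeff (coeff (Wp r s c) (s - 1 - i mod s)) (r - 1 - i div s)"
  unfolding Pm_def by (simp add: vecP_def)

lemma Pm_col: "c < r*s \<Longrightarrow> col (Pm r s :: 'a::comm_ring_1 mat) c = vecP r s (Wp r s c)"
  unfolding Pm_def by (rule eq_vecI) simp_all

lemma dm_bounds: "i < r*s \<Longrightarrow> i div s < r \<and> i mod s < s \<and> (s::nat) > 0"
  by (cases "s = 0") (auto simp: less_mult_imp_div_less)

lemma arith1: assumes "B < (s::nat)" "K < s" "A < r" "C < (r::nat)" "C \<le> A" "s-1-B \<le> s-1-K"
  "(s-1-K) - (s-1-B) + (r-1-C) \<le> r-1-A" shows "A = C \<and> B = K"
proof -
  have kb: "K \<le> B" using assms(1,2,6) by linarith
  have "(s-1-K) - (s-1-B) = B - K" using kb assms(1,2) by simp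
  hence "B - K + (r-1-C) \<le> r-1-A" using assms(7) by simp
  thus ?thesis using assms(3,4,5) kb by linarith
qed

lemma Pm_ut: assumes ic: "i < r*s" "c < r*s" "c < i"
  shows "(Pm r s :: 'a::comm_ring_1 mat) $$ (i,c) = 0"
proof -
  have b1: "i div s < r" "i mod s < s" "c div s < r" "c mod s < s" "s > 0"
    using dm_bounds[OF ic(1)] dm_bounds[OF ic(2)] by auto
  have le: "c div s \<le> i div s" using ic(3) by (simp add: div_le_mono)
  have nc: "\<not> (s - 1 - i mod s \<le> s - 1 - c mod s \<and>
      s - 1 - c mod s - (s - 1 - i mod s) + (r - 1 - c div s) \<le> r - 1 - i div s)"
  proof
    assume h: "s - 1 - i mod s \<le> s - 1 - c mod s \<and>
      s - 1 - c mod s - (s - 1 - i mod s) + (r - 1 - c div s) \<le> r - 1 - i div s"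
    have "i div s = c div s \<and> i mod s = c mod s" using arith1[OF b1(2,4,1,3) le] h by blast
    hence "i = c" using divmod_eq_iff by blast
    thus False using ic(3) by simp
  qed
  show ?thesis unfolding Pm_index[OF ic(1,2)] Wp_def Zp_coeff by (rule if_not_P[OF nc])
qed

lemma Pm_diag: assumes "c < r*s"
  shows "(Pm r s :: 'a::comm_ring_1 mat) $$ (c,c) = 1"
  unfolding Pm_index[OF assms assms] Wp_def Zp_coeff by simp

lemma Pm_det: "det (Pm r s :: 'a::field mat) = 1"
proof -
  have ut: "upper_triangular (Pm r s :: 'a mat)"
  proof (rule upper_triangularI)
    fix i j assume ji: "j < i" and i: "i < dim_row (Pm r s :: 'a mat)"
    have i': "i < r*s" using i carrier_matD(1)[OF Pm_carrier[of r s, where 'a='a]] by simp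
    show "(Pm r s :: 'a mat) $$ (i,j) = 0" using Pm_ut[OF i' _ ji] ji i' by simp
  qed
  have "diag_mat (Pm r s :: 'a mat) = map (\<lambda>i. 1) [0..<r*s]"
    unfolding diag_mat_def Pm_dims by (intro map_cong refl) (auto simp: Pm_diag)
  moreover have "prod_list (map (\<lambda>i. 1::'a) xs) = 1" for xs :: "nat list" by (induct xs) auto
  ultimately show ?thesis using det_upper_triangular[OF ut Pm_carrier] by simp
qed


lemma F1: assumes s: "(s::nat) > 0"
  shows "(l div s = c div s \<and> Suc (l mod s) = c mod s) \<longleftrightarrow> (Suc l = c \<and> c mod s \<noteq> 0)"
proof
  assume h: "l div s = c div s \<and> Suc (l mod s) = c mod s"
  have "c = c div s * s + c mod s" by simp
  also have "\<dots> = Suc (l div s * s + l mod s)"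
    using h[THEN conjunct1, symmetric] h[THEN conjunct2, symmetric] by simp
  also have "\<dots> = Suc l" by simp
  finally show "Suc l = c \<and> c mod s \<noteq> 0" using h by simp
next
  assume h: "Suc l = c \<and> c mod s \<noteq> 0"
  have m: "c mod s = Suc (l mod s)" using h by (auto simp: mod_Suc split: if_splits)
  have "c div s * s + Suc (l mod s) = l div s * s + Suc (l mod s)"
    using h m div_mult_mod_eq[of c s] div_mult_mod_eq[of l s] by simp
  hence eq: "c div s * s = l div s * s" by (metis add_right_cancel)
  have "c div s = l div s" using mult_right_cancel[of s "c div s" "l div s"] s eq by blast
  thus "l div s = c div s \<and> Suc (l mod s) = c mod s" using m by simp
qed

lemma Jm_entry: assumes s: "s > 0" and lc: "l < r*s" "c < r*s"
  shows "jordan_matrix (replicate r (s,1::'a::field)) $$ (l,c) =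
    (if l = c then 1 else 0) + (if Suc l = c \<and> c mod s \<noteq> 0 then 1 else 0)"
proof -
  have ms: "l mod s < s" "c mod s < s" using s by auto
  have dm: "(l div s = c div s \<and> l mod s = c mod s) = (l = c)" by (rule divmod_eq_iff)
  have f1: "(l div s = c div s \<and> Suc (l mod s) = c mod s) = (Suc l = c \<and> c mod s \<noteq> 0)" by (rule F1[OF s])
  have E: "jordan_matrix (replicate r (s,1::'a)) $$ (l,c) = (if l div s = c div s then
     (if l mod s = c mod s then 1 else if Suc (l mod s) = c mod s then 1 else 0) else 0)"
    unfolding jm_index[OF s lc] jordan_block_index(1)[OF ms] ..
  show ?thesis
  proof (cases "l = c")
    case True thus ?thesis unfolding E by simp
  next
    case False
    note ne = False
    show ?thesis
    proof (cases "Suc l = c \<and> c mod s \<noteq> 0")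
      case True
      hence "l div s = c div s" "Suc (l mod s) = c mod s" using f1 by blast+
      thus ?thesis using True ne unfolding E by simp
    next
      case False
      hence "\<not> (l div s = c div s \<and> Suc (l mod s) = c mod s)" using f1 by blast
      moreover have "\<not> (l div s = c div s \<and> l mod s = c mod s)" using dm ne by blast
      ultimately show ?thesis using False ne unfolding E by auto
    qed
  qed
qed

lemma sum2: assumes c: "c < n"
  shows "(\<Sum>l<n. f l * ((if l = c then 1 else 0) + (if Suc l = c \<and> P then 1 else 0))) =
     f c + (if 0 < c \<and> P then f (c - 1) else (0::'a::comm_ring_1))"
proof -
  have "(\<Sum>l<n. f l * ((if l = c then 1 else 0) + (if Suc l = c \<and> P then 1 else 0))) =
     (\<Sum>l<n. (if l = c then f l else 0) + (if l = c - 1 \<and> 0 < c \<and> P then f l else 0))"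
    by (intro sum.cong refl) auto
  also have "\<dots> = f c + (if 0 < c \<and> P then f (c - 1) else 0)"
    using c less_imp_diff_less[OF c] by (simp add: sum.distrib)
  finally show ?thesis .
qed

lemma commute:
  fixes p r s :: nat
  assumes s: "s > 0"
    and van: "\<And>g f e. g < s \<Longrightarrow> f < r \<Longrightarrow> coeff (coeff ((Zp :: 'a::field poly poly) ^ s * [:monom 1 e:]) g) f = 0"
  shows "Amat r s * Pm r s = Pm r s * (jordan_matrix (replicate r (s,1::'a)))"
proof (rule eq_matI)
  have Jc: "jordan_matrix (replicate r (s,1::'a)) \<in> carrier_mat (r*s) (r*s)" by (rule jm_carrier)
  show "dim_row (Amat r s * Pm r s) = dim_row (Pm r s * jordan_matrix (replicate r (s, 1::'a)))" by simp
  show "dim_col (Amat r s * Pm r s) = dim_col (Pm r s * jordan_matrix (replicate r (s, 1::'a)))" using Jc by (simp add: sum_list_replicate)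
  fix i c assume i: "i < dim_row (Pm r s * jordan_matrix (replicate r (s, 1::'a)))"
    and c: "c < dim_col (Pm r s * jordan_matrix (replicate r (s, 1::'a)))"
  hence ic: "i < r*s" "c < r*s" using Jc by (auto simp: sum_list_replicate)
  have U: "([:[:1,1:],[:1,1:]:] :: 'a poly poly) = Zp + 1" by (simp add: Zp_def one_pCons)
  have UV: "vecP r s ([:[:1,1:],[:1,1:]:] * Wp r s c) = vecP r s ((Zp + 1) * Wp r s c)"
    by (simp add: Zp_def one_pCons)
  have "(Amat r s * Pm r s) $$ (i,c) = (Amat r s *\<^sub>v col (Pm r s) c) $ i"
    using ic by simp
  also have "\<dots> = vecP r s ((Zp + 1) * Wp r s c) $ i"
    using ic by (simp only: Pm_col Amat_vecP UV)
  also have "\<dots> = (vecP r s (Zp * Wp r s c) + vecP r s (Wp r s c)) $ i"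
    by (simp only: distrib_right mult_1_left vecP_add)
  also have "\<dots> = vecP r s (Wp r s c) $ i + vecP r s (Zp * Wp r s c) $ i"
    using ic by (simp add: add.commute)
  finally have L: "(Amat r s * Pm r s) $$ (i,c) = vecP r s (Wp r s c) $ i + vecP r s (Zp * Wp r s c) $ i" .
  have "(Pm r s * jordan_matrix (replicate r (s, 1::'a))) $$ (i,c) =
      (\<Sum>l<r*s. Pm r s $$ (i,l) * jordan_matrix (replicate r (s, 1::'a)) $$ (l,c))"
    using ic Jc by (simp add: scalar_prod_def lessThan_atLeast0 sum_list_replicate)
  also have "\<dots> = (\<Sum>l<r*s. Pm r s $$ (i,l) * ((if l = c then 1 else 0) + (if Suc l = c \<and> c mod s \<noteq> 0 then 1 else 0)))"
    using ic by (intro sum.cong refl) (simp add: Jm_entry[OF s])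
  also have "\<dots> = Pm r s $$ (i,c) + (if 0 < c \<and> c mod s \<noteq> 0 then Pm r s $$ (i,c-1) else 0)"
    by (rule sum2[OF ic(2)])
  finally have R: "(Pm r s * jordan_matrix (replicate r (s, 1::'a))) $$ (i,c) =
     Pm r s $$ (i,c) + (if 0 < c \<and> c mod s \<noteq> 0 then Pm r s $$ (i,c-1) else 0)" .
  have v1: "vecP r s (Wp r s c) $ i = (Pm r s :: 'a mat) $$ (i,c)"
    using ic by (simp add: Pm_index vecP_def)
  have v2: "vecP r s (Zp * Wp r s c) $ i = (if 0 < c \<and> c mod s \<noteq> 0 then (Pm r s :: 'a mat) $$ (i,c-1) else 0)"
  proof (cases "c mod s = 0")
    case True
    have "Zp * Wp r s c = (Zp ^ s * [:monom 1 (r - 1 - c div s):] :: 'a poly poly)"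
      unfolding Wp_def True using s by (simp add: mult.assoc power_Suc[symmetric])
    moreover have "s - 1 - i mod s < s" "r - 1 - i div s < r" using dm_bounds[OF ic(1)] by auto
    ultimately show ?thesis using True ic van by (simp add: vecP_def)
  next
    case False
    hence c0: "0 < c" by (cases c) auto
    have F: "(c - 1) div s = c div s \<and> Suc ((c - 1) mod s) = c mod s"
      using F1[OF s, of "c-1" c] False c0 by simp
    have k: "s - 1 - (c - 1) mod s = Suc (s - 1 - c mod s)"
      using F dm_bounds[OF ic(2)] by linarith
    have "Zp * Wp r s c = (Wp r s (c-1) :: 'a poly poly)"
      unfolding Wp_def k using F by (simp add: mult.assoc)
    moreover have "c - 1 < r * s" using ic by simp
    ultimately show ?thesis using False c0 ic by (simp add: vecP_def Pm_index)
  qed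
  show "(Amat r s * Pm r s) $$ (i,c) = (Pm r s * jordan_matrix (replicate r (s, 1::'a))) $$ (i,c)"
    unfolding L R v1 v2 ..
qed

lemma dir2:
  fixes p r s :: nat
  assumes p: "prime p" and ch: "CHAR('a::field) = p" and r: "0 < r" "r \<le> s"
    and dv: "p ^ (LEAST m. r \<le> p ^ m) dvd s"
  shows "jordan_nf (Amat r s :: 'a mat) (replicate r (s, 1))"
proof -
  have s: "s > 0" using r by simp
  have comm: "Amat r s * Pm r s = Pm r s * (jordan_matrix (replicate r (s,1::'a)))"
    by (rule commute[OF s]) (rule vanish[OF p ch dv])
  have Pc: "(Pm r s :: 'a mat) \<in> carrier_mat (r*s) (r*s)" by (rule Pm_carrier)
  have Jc: "jordan_matrix (replicate r (s,1::'a)) \<in> carrier_mat (r*s) (r*s)" by (rule jm_carrier)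
  have "det (Pm r s :: 'a mat) \<noteq> 0" by (simp add: Pm_det)
  from det_non_zero_imp_unit[OF Pc this, unfolded Units_def, of "()"]
  obtain Q :: "'a mat" where Q: "Q \<in> carrier_mat (r*s) (r*s)" and QP: "Q * Pm r s = 1\<^sub>m (r*s)" and PQ: "Pm r s * Q = 1\<^sub>m (r*s)"
    by (auto simp: ring_mat_def)
  have "Amat r s = Amat r s * (Pm r s * Q)" using PQ by simp
  also have "\<dots> = (Amat r s * Pm r s) * Q" using Pc Q by (simp add: assoc_mult_mat[of _ "r*s" "r*s" _ "r*s" _ "r*s"])
  also have "\<dots> = Pm r s * jordan_matrix (replicate r (s,1::'a)) * Q" unfolding comm ..
  finally have A: "Amat r s = Pm r s * jordan_matrix (replicate r (s,1::'a)) * Q" .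
  have "similar_mat (Amat r s :: 'a mat) (jordan_matrix (replicate r (s,1)))"
    by (rule similar_matI[of _ _ _ Q "r*s"]) (use Pc Jc Q PQ QP A in auto)
  thus ?thesis unfolding jordan_nf_def using s by auto
qed


theorem proposition3:
  fixes p r s :: nat
  assumes "prime p" and "CHAR('a::field) = p" and "0 < r" and "r \<le> s"
  shows "jordan_nf (kron_mat (jordan_block r (1::'a)) (jordan_block s 1)) (replicate r (s, 1))
         \<longleftrightarrow> p ^ (LEAST m. r \<le> p ^ m) dvd s"
proof
  assume "jordan_nf (kron_mat (jordan_block r (1::'a)) (jordan_block s 1)) (replicate r (s, 1))"
  thus "p ^ (LEAST m. r \<le> p ^ m) dvd s" by (rule dir1[OF assms])
next
  assume "p ^ (LEAST m. r \<le> p ^ m) dvd s"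
  thus "jordan_nf (kron_mat (jordan_block r (1::'a)) (jordan_block s 1)) (replicate r (s, 1))"
    by (rule dir2[OF assms])
qed

end
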